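(* Let $n\ge2$ be a power of 2 and $f = \mathsf{ADDR}_n$. Then $\mathsf{D}_{\mathrm{cc}}^\rightarrow(f \circ \mathsf{AND}) \geq \mathrm{rank}(M_{f \circ \mathsf{AND}})^{\log_3 2}$.
   Context: $\mathsf{ADDR}_n:\{0,1\}^{\log n+n}\to\{0,1\}$ is $\mathsf{ADDR}_n(x,y)=y_{\mathsf{bin}(x)}$ for $x\in\{0,1\}^{\log n}$, $y\in\{0,1\}^n$, where $\mathsf{bin}(x)\in[n]$ is the integer whose binary representation is $x$. For $f:\{0,1\}^m\to\{0,1\}$, $f\circ\mathsf{AND}$ is the two-party function $(u,v)\mapsto f(u_1\wedge v_1,\dots,u_m\wedge v_m)$ with Alice holding $u\in\{0,1\}^m$, Bob $v\in\{0,1\}^m$; $M_{f\circ\mathsf{AND}}$ is its communication matrix (entry $(u,v)$ equals $(f\circ\mathsf{AND})(u,v)$), $\mathrm{rank}$ is real rank, and $\mathsf{D}_{\mathrm{cc}}^\rightarrow$ is deterministic one-way communication complexity. *)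

theory Defs
  imports "HOL-Analysis.Analysis" "Jordan_Normal_Form.DL_Rank"
begin

(* bin(x): integer whose (big-endian) binary representation is x; values in {0..<2^length x},
   used as a 0-based index into y (i.e. the paper's [n] shifted by one). *)
definition bin :: "bool list \<Rightarrow> nat" where
  "bin x = foldl (\<lambda>acc b. 2 * acc + (if b then 1 else 0)) 0 x"

definition addr_len :: "nat \<Rightarrow> nat" where
  "addr_len n = nat \<lfloor>log 2 (real n)\<rfloor>"

definition ADDR :: "nat \<Rightarrow> bool list \<Rightarrow> bool" where
  "ADDR n w = (let x = take (addr_len n) w; y = drop (addr_len n) w in y ! bin x)"

definition and_compose :: "(bool list \<Rightarrow> bool) \<Rightarrow> bool list \<Rightarrow> bool list \<Rightarrow> bool" where
  "and_compose f u v = f (map2 (\<and>) u v)"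

definition to_bits :: "nat \<Rightarrow> nat \<Rightarrow> bool list" where
  "to_bits m i = map (\<lambda>j. odd (i div 2 ^ j)) [0..<m]"

definition comm_matrix :: "nat \<Rightarrow> (bool list \<Rightarrow> bool list \<Rightarrow> bool) \<Rightarrow> real mat" where
  "comm_matrix m F = mat (2 ^ m) (2 ^ m) (\<lambda>(i, j). if F (to_bits m i) (to_bits m j) then 1 else 0)"

definition real_rank :: "real mat \<Rightarrow> nat" where
  "real_rank A = vec_space.rank (dim_row A) A"

(* deterministic one-way protocol (Alice -> Bob) of cost c computing F on inputs of length m:
   Alice sends a c-bit message depending on u only, Bob outputs from message and v *)
definition oneway_protocol :: "nat \<Rightarrow> (bool list \<Rightarrow> bool list \<Rightarrow> bool) \<Rightarrow> nat \<Rightarrow> bool" where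
  "oneway_protocol m F c \<longleftrightarrow>
     (\<exists>(a :: bool list \<Rightarrow> bool list) (b :: bool list \<Rightarrow> bool list \<Rightarrow> bool).
        (\<forall>u. length u = m \<longrightarrow> length (a u) = c) \<and>
        (\<forall>u v. length u = m \<longrightarrow> length v = m \<longrightarrow> b (a u) v = F u v))"

definition D_oneway :: "nat \<Rightarrow> (bool list \<Rightarrow> bool list \<Rightarrow> bool) \<Rightarrow> nat" where
  "D_oneway m F = (LEAST c. oneway_protocol m F c)"

end

theory Submission
  imports Defs
begin

lemma rank_sum_le:
  fixes f g :: "nat \<Rightarrow> nat \<Rightarrow> real"
  shows "vec_space.rank N (mat N N' (\<lambda>(r,c). \<Sum>t<K. f t r * g t c)) \<le> K"
proof (induction K)
  case 0
  have "mat N N' (\<lambda>_. 0) = (0\<^sub>m N N' :: real mat)"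
    by (auto simp: eq_matI)
  then show ?case using vec_space.rank_0I[of N N'] by simp
next
  case (Suc K)
  have e: "mat N N' (\<lambda>(r,c). \<Sum>t<Suc K. f t r * g t c) =
     mat N N' (\<lambda>(r,c). \<Sum>t<K. f t r * g t c) + mat N N' (\<lambda>(r,c). f K r * g K c)"
    by (rule eq_matI) auto
  have r1: "vec_space.rank N (mat N N' (\<lambda>(r,c). f K r * g K c)) \<le> 1"
    by (rule vec_space.rank_le_1_product_entries[of _ N N' "f K" "g K"]) auto
  have "vec_space.rank N (mat N N' (\<lambda>(r,c). \<Sum>t<Suc K. f t r * g t c)) \<le>
     vec_space.rank N (mat N N' (\<lambda>(r,c). \<Sum>t<K. f t r * g t c)) + vec_space.rank N (mat N N' (\<lambda>(r,c). f K r * g K c))"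
    unfolding e by (rule vec_space.rank_subadditive) auto
  then show ?case using Suc r1 by simp
qed

lemma foldl_bin_acc:
  "foldl (\<lambda>acc b. 2 * acc + (if b then 1 else 0)) acc p
   = acc * 2 ^ length p + foldl (\<lambda>acc b. 2 * acc + (if b then 1 else 0)) (0::nat) p"
proof (induction p arbitrary: acc)
  case Nil then show ?case by simp
next
  case (Cons x p)
  define g where "g = (\<lambda>acc b. 2 * acc + (if b then 1 else 0::nat))"
  have IH: "foldl g a p = a * 2 ^ length p + foldl g 0 p" for a
    using Cons.IH unfolding g_def by blast
  have "foldl g acc (x # p) = (2 * acc + (if x then 1 else 0)) * 2 ^ length p + foldl g 0 p"
    using IH[of "2 * acc + (if x then 1 else 0)"] by (simp add: g_def)
  moreover have "foldl g 0 (x # p) = (if x then 1 else 0) * 2 ^ length p + foldl g 0 p"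
    using IH[of "(if x then 1 else 0)"] by (simp add: g_def)
  ultimately have "foldl g acc (x # p) = acc * 2 ^ length (x # p) + foldl g 0 (x # p)"
    by (simp add: algebra_simps)
  then show ?case unfolding g_def .
qed

lemma bin_Cons: "bin (b # p) = (if b then 2 ^ length p else 0) + bin p"
  by (cases b) (simp_all add: bin_def foldl_bin_acc[of "Suc 0" p])

lemma bin_lt: "bin p < 2 ^ length p"
proof (induction p)
  case Nil then show ?case by (simp add: bin_def)
next
  case (Cons x p) then show ?case by (simp add: bin_Cons)
qed

fun binv :: "nat \<Rightarrow> nat \<Rightarrow> bool list" where
  "binv 0 j = []"
| "binv (Suc k) j = (2 ^ k \<le> j) # binv k (j mod 2 ^ k)"

lemma length_binv: "length (binv k j) = k"
  by (induction k arbitrary: j) auto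

lemma bin_binv: "j < 2 ^ k \<Longrightarrow> bin (binv k j) = j"
proof (induction k arbitrary: j)
  case 0 then show ?case by (simp add: bin_def)
next
  case (Suc k)
  have "bin (binv k (j mod 2 ^ k)) = j mod 2 ^ k" by (rule Suc.IH) simp
  moreover have "(if 2 ^ k \<le> j then 2 ^ k else 0) + j mod 2 ^ k = j"
    using Suc.prems by (auto simp: le_mod_geq)
  moreover have "bin (binv (Suc k) j) = (if 2^k \<le> j then 2^k else 0) + bin (binv k (j mod 2^k))"
    by (simp add: bin_Cons length_binv)
  ultimately show ?case by linarith
qed

lemma sum_three:
  fixes f :: "nat \<Rightarrow> real"
  shows "(\<Sum>t<3 * K. f t) = (\<Sum>t<K. f t) + (\<Sum>t<K. f (t + K)) + (\<Sum>t<K. f (t + 2 * K))"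
proof -
  have a: "(\<Sum>t<A + B. f t) = (\<Sum>t<A. f t) + (\<Sum>t<B. f (t + A))" for A B
    by (induction B) (auto simp: algebra_simps)
  have eq: "3 * K = (K + K) + K" by simp
  have s1: "(\<Sum>t<(K + K) + K. f t) = (\<Sum>t<K + K. f t) + (\<Sum>t<K. f (t + (K + K)))"
    by (rule a)
  have s2: "(\<Sum>t<K + K. f t) = (\<Sum>t<K. f t) + (\<Sum>t<K. f (t + K))"
    by (rule a)
  show ?thesis unfolding eq s1 s2 mult_2 ..
qed


lemma bin_map2_Cons:
  assumes "length p = length q"
  shows "bin (map2 (\<and>) (x # p) (y # q)) = (if x \<and> y then 2 ^ length p else 0) + bin (map2 (\<and>) p q)"
  using assms by (simp add: bin_Cons)

lemma decomp:
  "\<exists>(\<Phi> :: nat \<Rightarrow> (nat \<Rightarrow> real) \<Rightarrow> bool list \<Rightarrow> real) (\<Psi> :: nat \<Rightarrow> (nat \<Rightarrow> real) \<Rightarrow> bool list \<Rightarrow> real).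
     \<forall>p q \<alpha> \<beta>. length p = k \<longrightarrow> length q = k \<longrightarrow>
       \<alpha> (bin (map2 (\<and>) p q)) * \<beta> (bin (map2 (\<and>) p q)) = (\<Sum>t<3^k. \<Phi> t \<alpha> p * \<Psi> t \<beta> q)"
proof (induction k)
  case 0
  show ?case
    by (rule exI[of _ "\<lambda>t \<alpha> p. \<alpha> 0"], rule exI[of _ "\<lambda>t \<beta> q. \<beta> 0"]) (simp add: bin_def)
next
  case (Suc k)
  then obtain \<Phi> \<Psi> :: "nat \<Rightarrow> (nat \<Rightarrow> real) \<Rightarrow> bool list \<Rightarrow> real" where IH: "\<And>p q \<alpha> \<beta>. length p = k \<Longrightarrow> length q = k \<Longrightarrow>
       \<alpha> (bin (map2 (\<and>) p q)) * \<beta> (bin (map2 (\<and>) p q)) = (\<Sum>t<(3::nat)^k. \<Phi> t \<alpha> p * \<Psi> t \<beta> q)"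
    by blast
  define K where "K = (3::nat) ^ k"
  define \<Phi>' where "\<Phi>' = (\<lambda>t (\<alpha>::nat\<Rightarrow>real) p. let x = (if hd p then 1 else 0::real); p' = tl p in
      if t < K then x * \<Phi> t (\<lambda>c. \<alpha> (2^k + c)) p'
      else if t < 2 * K then \<Phi> (t - K) \<alpha> p' else x * \<Phi> (t - 2 * K) \<alpha> p')"
  define \<Psi>' where "\<Psi>' = (\<lambda>t (\<beta>::nat\<Rightarrow>real) q. let y = (if hd q then 1 else 0::real); q' = tl q in
      if t < K then y * \<Psi> t (\<lambda>c. \<beta> (2^k + c)) q'
      else if t < 2 * K then \<Psi> (t - K) \<beta> q' else - y * \<Psi> (t - 2 * K) \<beta> q')"
  show ?case
  proof (rule exI[of _ \<Phi>'], rule exI[of _ \<Psi>'], intro allI impI)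
    fix p q :: "bool list" and \<alpha> \<beta> :: "nat \<Rightarrow> real"
    assume lp: "length p = Suc k" and lq: "length q = Suc k"
    then obtain x p' y q' where p: "p = x # p'" and q: "q = y # q'" and lp': "length p' = k" and lq': "length q' = k"
      by (metis length_Suc_conv)
    define b where "b = bin (map2 (\<and>) p' q')"
    define X where "X = (if x then 1 else 0::real)"
    define Y where "Y = (if y then 1 else 0::real)"
    have S1: "(\<Sum>t<K. \<Phi>' t \<alpha> p * \<Psi>' t \<beta> q) = X * Y * (\<alpha> (2^k + b) * \<beta> (2^k + b))"
    proof -
      have "(\<Sum>t<K. \<Phi>' t \<alpha> p * \<Psi>' t \<beta> q) = (\<Sum>t<K. X * Y * (\<Phi> t (\<lambda>c. \<alpha> (2^k + c)) p' * \<Psi> t (\<lambda>c. \<beta> (2^k + c)) q'))"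
        by (rule sum.cong) (auto simp: \<Phi>'_def \<Psi>'_def p q X_def Y_def)
      also have "\<dots> = X * Y * (\<Sum>t<K. \<Phi> t (\<lambda>c. \<alpha> (2^k + c)) p' * \<Psi> t (\<lambda>c. \<beta> (2^k + c)) q')"
        by (simp add: sum_distrib_left)
      also have "\<dots> = X * Y * (\<alpha> (2^k + b) * \<beta> (2^k + b))"
        using IH[OF lp' lq', of "\<lambda>c. \<alpha> (2^k + c)" "\<lambda>c. \<beta> (2^k + c)"] by (simp add: K_def b_def)
      finally show ?thesis .
    qed
    have S2: "(\<Sum>t<K. \<Phi>' (t + K) \<alpha> p * \<Psi>' (t + K) \<beta> q) = \<alpha> b * \<beta> b"
    proof -
      have "(\<Sum>t<K. \<Phi>' (t + K) \<alpha> p * \<Psi>' (t + K) \<beta> q) = (\<Sum>t<K. \<Phi> t \<alpha> p' * \<Psi> t \<beta> q')"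
        by (rule sum.cong) (auto simp: \<Phi>'_def \<Psi>'_def p q)
      also have "\<dots> = \<alpha> b * \<beta> b"
        using IH[OF lp' lq', of \<alpha> \<beta>] by (simp add: K_def b_def)
      finally show ?thesis .
    qed
    have S3: "(\<Sum>t<K. \<Phi>' (t + 2 * K) \<alpha> p * \<Psi>' (t + 2 * K) \<beta> q) = - (X * Y * (\<alpha> b * \<beta> b))"
    proof -
      have "(\<Sum>t<K. \<Phi>' (t + 2 * K) \<alpha> p * \<Psi>' (t + 2 * K) \<beta> q) = (\<Sum>t<K. - (X * Y) * (\<Phi> t \<alpha> p' * \<Psi> t \<beta> q'))"
        by (rule sum.cong) (auto simp: \<Phi>'_def \<Psi>'_def p q X_def Y_def)
      also have "\<dots> = - (X * Y) * (\<Sum>t<K. \<Phi> t \<alpha> p' * \<Psi> t \<beta> q')"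
        by (simp add: sum_distrib_left)
      also have "\<dots> = - (X * Y * (\<alpha> b * \<beta> b))"
        using IH[OF lp' lq', of \<alpha> \<beta>] by (simp add: K_def b_def)
      finally show ?thesis .
    qed
    have "(\<Sum>t<3 ^ Suc k. \<Phi>' t \<alpha> p * \<Psi>' t \<beta> q) = (\<Sum>t<3 * K. \<Phi>' t \<alpha> p * \<Psi>' t \<beta> q)"
      by (simp add: K_def)
    also have "\<dots> = X * Y * (\<alpha> (2^k + b) * \<beta> (2^k + b)) + \<alpha> b * \<beta> b - X * Y * (\<alpha> b * \<beta> b)"
      unfolding sum_three S1 S2 S3 by simp
    also have "\<dots> = \<alpha> (bin (map2 (\<and>) p q)) * \<beta> (bin (map2 (\<and>) p q))"
      using bin_map2_Cons[of p' q' x y] lp' lq' by (simp add: p q b_def X_def Y_def)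
    finally show "\<alpha> (bin (map2 (\<and>) p q)) * \<beta> (bin (map2 (\<and>) p q)) = (\<Sum>t<3 ^ Suc k. \<Phi>' t \<alpha> p * \<Psi>' t \<beta> q)"
      by simp
  qed
qed


lemma addr_len_pow: "addr_len (2 ^ k) = k"
  unfolding addr_len_def by (simp add: log_nat_power)

lemma ADDR_and:
  assumes n: "n = 2 ^ k" and lu: "length u = k + n" and lv: "length v = k + n"
  shows "and_compose (ADDR n) u v =
    (let b = bin (map2 (\<and>) (take k u) (take k v)) in drop k u ! b \<and> drop k v ! b)"
proof -
  have ak: "addr_len n = k" using n addr_len_pow by simp
  define b where "b = bin (map2 (\<and>) (take k u) (take k v))"
  have "b < 2 ^ length (map2 (\<and>) (take k u) (take k v))" unfolding b_def by (rule bin_lt)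
  then have bn: "b < n" using lu lv n by simp
  have "and_compose (ADDR n) u v = map2 (\<and>) (drop k u) (drop k v) ! b"
    unfolding and_compose_def ADDR_def ak Let_def b_def by (simp add: take_map take_zip drop_map drop_zip)
  also have "\<dots> = (drop k u ! b \<and> drop k v ! b)" using bn lu lv by simp
  finally show ?thesis unfolding b_def Let_def .
qed

lemma rank_bound:
  assumes n: "n = 2 ^ k"
  shows "real_rank (comm_matrix (addr_len n + n) (and_compose (ADDR n))) \<le> 3 ^ k"
proof -
  have ak: "addr_len n = k" using n addr_len_pow by simp
  define m where "m = k + n"
  obtain \<Phi> \<Psi> :: "nat \<Rightarrow> (nat \<Rightarrow> real) \<Rightarrow> bool list \<Rightarrow> real" where D: "\<And>p q \<alpha> \<beta>. length p = k \<Longrightarrow> length q = k \<Longrightarrow>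
       \<alpha> (bin (map2 (\<and>) p q)) * \<beta> (bin (map2 (\<and>) p q)) = (\<Sum>t<(3::nat)^k. \<Phi> t \<alpha> p * \<Psi> t \<beta> q)"
    using decomp[of k] by blast
  define f where "f = (\<lambda>t r. \<Phi> t (\<lambda>a. if drop k (to_bits m r) ! a then 1 else 0) (take k (to_bits m r)))"
  define g where "g = (\<lambda>t r. \<Psi> t (\<lambda>a. if drop k (to_bits m r) ! a then 1 else 0) (take k (to_bits m r)))"
  have eq: "comm_matrix m (and_compose (ADDR n)) = mat (2^m) (2^m) (\<lambda>(r,c). \<Sum>t<3^k. f t r * g t c)"
    unfolding comm_matrix_def
  proof (rule cong[of "mat (2^m) (2^m)"], rule refl, rule ext, clarify)
    fix r c
    define u where "u = to_bits m r"
    define v where "v = to_bits m c"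
    have lu: "length u = k + n" and lv: "length v = k + n" by (simp_all add: u_def v_def to_bits_def m_def)
    have tk: "length (take k u) = k" "length (take k v) = k" using lu lv by simp_all
    show "(if and_compose (ADDR n) (to_bits m r) (to_bits m c) then 1 else 0) = (\<Sum>t<3 ^ k. f t r * g t c)"
      unfolding f_def g_def u_def[symmetric] v_def[symmetric] ADDR_and[OF n lu lv] Let_def
      using D[OF tk, of "\<lambda>a. if drop k u ! a then 1 else 0" "\<lambda>a. if drop k v ! a then 1 else 0"]
      by (simp split: if_splits)
  qed
  show ?thesis
    unfolding real_rank_def ak m_def[symmetric] eq
    using rank_sum_le[where f=f and g=g and N="2^m" and N'="2^m" and K="3^k"] by simp
qed


lemma map2_and_True: "length xs = k \<Longrightarrow> map2 (\<and>) (replicate k True) xs = xs"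
  by (induction xs arbitrary: k) auto

lemma map2_and_True2: "length xs = k \<Longrightarrow> map2 (\<and>) xs (replicate k True) = xs"
  by (induction xs arbitrary: k) auto

lemma protocol_lb:
  assumes n: "n = 2 ^ k" and P: "oneway_protocol (addr_len n + n) (and_compose (ADDR n)) c"
  shows "n \<le> c"
proof (rule ccontr)
  assume "\<not> n \<le> c"
  then have cn: "c < n" by simp
  have ak: "addr_len n = k" using n addr_len_pow by simp
  obtain a :: "bool list \<Rightarrow> bool list" and b :: "bool list \<Rightarrow> bool list \<Rightarrow> bool" where la: "\<And>u. length u = k + n \<Longrightarrow> length (a u) = c"
    and ab: "\<And>u v. length u = k + n \<Longrightarrow> length v = k + n \<Longrightarrow> b (a u) v = and_compose (ADDR n) u v"
    using P unfolding oneway_protocol_def ak by blast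
  define Y where "Y = {ys :: bool list. length ys = n}"
  define pr where "pr = (\<lambda>ys. replicate k True @ ys)"
  have cY: "card Y = 2 ^ n"
    using card_lists_length_eq[of "UNIV :: bool set" n] unfolding Y_def by simp
  have sub: "(a \<circ> pr) ` Y \<subseteq> {ms. length ms = c}"
    using la by (auto simp: Y_def pr_def)
  have cM: "card {ms :: bool list. length ms = c} = 2 ^ c"
    using card_lists_length_eq[of "UNIV :: bool set" c] by simp
  have "card ((a \<circ> pr) ` Y) \<le> 2 ^ c"
    using card_mono[OF _ sub] cM finite_lists_length_eq[of "UNIV :: bool set" c] by simp
  also have "\<dots> < 2 ^ n" using cn by simp
  finally have "\<not> inj_on (a \<circ> pr) Y" using cY card_image by fastforce
  then obtain ys1 ys2 where y1: "ys1 \<in> Y" and y2: "ys2 \<in> Y" and ne: "ys1 \<noteq> ys2"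
    and same: "a (pr ys1) = a (pr ys2)"
    unfolding inj_on_def by auto
  have l1: "length ys1 = n" and l2: "length ys2 = n" using y1 y2 by (auto simp: Y_def)
  have "\<exists>j<n. ys1 ! j \<noteq> ys2 ! j"
    using nth_equalityI[of ys1 ys2] ne l1 l2 by auto
  then obtain j where jn: "j < n" and dj: "ys1 ! j \<noteq> ys2 ! j" by blast
  define v where "v = binv k j @ replicate n True"
  have lv: "length v = k + n" by (simp add: v_def length_binv)
  have val: "and_compose (ADDR n) (pr ys) v = ys ! j" if "length ys = n" for ys
  proof -
    have lu: "length (pr ys) = k + n" using that by (simp add: pr_def)
    have tk: "take k (pr ys) = replicate k True" "take k v = binv k j"
      by (simp_all add: pr_def v_def length_binv)
    have dk: "drop k (pr ys) = ys" "drop k v = replicate n True"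
      by (simp_all add: pr_def v_def length_binv)
    have bj: "bin (binv k j) = j" using jn n bin_binv by simp
    show ?thesis
      unfolding ADDR_and[OF n lu lv] tk dk Let_def map2_and_True[OF length_binv] bj
      using jn by simp
  qed
  have "ys1 ! j = b (a (pr ys1)) v" using val[OF l1] ab[OF _ lv, of "pr ys1"] l1 by (simp add: pr_def)
  also have "\<dots> = b (a (pr ys2)) v" using same by simp
  also have "\<dots> = ys2 ! j" using val[OF l2] ab[OF _ lv, of "pr ys2"] l2 by (simp add: pr_def)
  finally show False using dj by simp
qed

lemma D_lb:
  assumes n: "n = 2 ^ k"
  shows "n \<le> D_oneway (addr_len n + n) (and_compose (ADDR n))"
proof -
  have ex: "oneway_protocol (addr_len n + n) (and_compose (ADDR n)) (addr_len n + n)"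
    unfolding oneway_protocol_def
    by (rule exI[of _ "\<lambda>u. u"], rule exI[of _ "and_compose (ADDR n)"]) simp
  show ?thesis unfolding D_oneway_def
    by (rule LeastI2_ex) (use ex in blast, rule protocol_lb[OF n])
qed

theorem corollaryA5:
  fixes n :: nat
  assumes "n \<ge> 2" and "\<exists>k. n = 2 ^ k"
  shows "real (D_oneway (addr_len n + n) (and_compose (ADDR n)))
           \<ge> real (real_rank (comm_matrix (addr_len n + n) (and_compose (ADDR n)))) powr log 3 2"
proof -
  obtain k where n: "n = 2 ^ k" using assms(2) by blast
  define r where "r = real_rank (comm_matrix (addr_len n + n) (and_compose (ADDR n)))"
  have r: "real r \<le> 3 ^ k" using rank_bound[OF n] unfolding r_def
    by (metis of_nat_le_iff of_nat_numeral of_nat_power)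
  have "real r powr log 3 2 \<le> (3 ^ k) powr log 3 2"
    by (rule powr_mono2) (use r in auto)
  also have "(3 ^ k :: real) powr log 3 2 = (3 powr real k) powr log 3 2"
    by (simp add: powr_realpow)
  also have "\<dots> = 3 powr (real k * log 3 2)" by (rule powr_powr)
  also have "\<dots> = 3 powr (log 3 2 * real k)" by (metis mult.commute)
  also have "\<dots> = (3 powr log 3 2) powr real k" by (rule powr_powr[symmetric])
  also have "\<dots> = 2 powr real k" by simp
  also have "\<dots> = 2 ^ k" by (simp add: powr_realpow)
  also have "\<dots> = real n" using n by simp
  also have "\<dots> \<le> real (D_oneway (addr_len n + n) (and_compose (ADDR n)))"
    using D_lb[OF n] by simp
  finally show ?thesis unfolding r_def .
qed

end
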